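(* Let $A,B,C\in\mathbb R$ and $a,b,c\ge0$ with $\min\{a+b,b+c,c+a\}>1/2$ and $a+b+c>1$. Then for all measurable $f,g$ on $\mathbb R$, $$\big\|\langle\cdot+A\rangle^{-a}(f*g)\big\|_{L^1(\mathbb R)}\le K\,\|\langle\cdot+B\rangle^bf\|_{L^2(\mathbb R)}\|\langle\cdot+C\rangle^cg\|_{L^2(\mathbb R)},$$ where $K$ depends only on $a,b,c$ (not on $A,B,C$).
   Context: $\langle x\rangle=(1+|x|^2)^{1/2}$, and $*$ denotes convolution on $\mathbb R$. *)

theory Defs
  imports "HOL-Analysis.Analysis"
begin

definition jbr :: "real \<Rightarrow> real" where
  "jbr x = sqrt (1 + x\<^sup>2)"

text \<open>Convolution on the real line (Lebesgue/Bochner integral; value 0 where the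
  defining integral does not converge absolutely).\<close>
definition conv :: "(real \<Rightarrow> complex) \<Rightarrow> (real \<Rightarrow> complex) \<Rightarrow> real \<Rightarrow> complex" where
  "conv f g x = (LINT y|lebesgue. f y * g (x - y))"

definition L1norm :: "(real \<Rightarrow> complex) \<Rightarrow> ennreal" where
  "L1norm h = (\<integral>\<^sup>+ x. ennreal (cmod (h x)) \<partial>lebesgue)"

definition L2norm :: "(real \<Rightarrow> complex) \<Rightarrow> ennreal" where
  "L2norm h = (let I = (\<integral>\<^sup>+ x. ennreal ((cmod (h x))\<^sup>2) \<partial>lebesgue)
               in if I = \<infinity> then \<infinity> else ennreal (sqrt (enn2real I)))"

end

theory Submission imports Defs begin
definition Sq :: "ennreal \<Rightarrow> ennreal" where
  "Sq I = (if I = \<infinity> then \<infinity> else ennreal (sqrt (enn2real I)))"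

lemma Sq_sq: "(Sq I)^2 = I"
  by (cases I) (auto simp: Sq_def ennreal_power)

lemma ennreal_sq_le: fixes x y :: ennreal shows "x^2 \<le> y^2 \<Longrightarrow> x \<le> y"
proof (cases y)
  case (real r)
  assume h: "x^2 \<le> y^2"
  show ?thesis
  proof (cases x)
    case (real s)
    with h \<open>y = ennreal r\<close> \<open>0 \<le> r\<close> have "s^2 \<le> r^2" by (simp add: ennreal_power)
    with real \<open>0 \<le> r\<close> have "s \<le> r" using abs_le_square_iff by fastforce
    then show ?thesis using real \<open>y = ennreal r\<close> by simp
  next
    case top with h \<open>y = ennreal r\<close> \<open>0 \<le> r\<close> show ?thesis by (simp add: ennreal_power top_unique)
  qed
qed simp

lemma le_Sq: "J^2 \<le> I1 * I2 \<Longrightarrow> J \<le> Sq I1 * Sq I2"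
  by (rule ennreal_sq_le) (simp add: power_mult_distrib Sq_sq)

lemma Sq_fin: "I < \<infinity> \<Longrightarrow> Sq I < \<infinity>"
  by (simp add: Sq_def)

lemma L2norm_Sq: "L2norm h = Sq (\<integral>\<^sup>+ x. ennreal ((cmod (h x))\<^sup>2) \<partial>lebesgue)"
  by (simp add: L2norm_def Sq_def Let_def)

lemma jbr_ge1: "1 \<le> jbr t"
  unfolding jbr_def by simp

lemma jbr_ge: "(1 + \<bar>t\<bar>) / 2 \<le> jbr t"
  unfolding jbr_def
proof (rule real_le_rsqrt)
  have "0 \<le> (\<bar>t\<bar> - 1)^2" by simp
  then have "(1 + \<bar>t\<bar>)^2 \<le> 2 * (1 + t^2)"
    by (simp add: power2_eq_square algebra_simps)
  moreover have "2 * (1 + t^2) \<le> 4 * (1 + t^2)" by simp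
  ultimately have "(1 + \<bar>t\<bar>)^2 \<le> 4 * (1 + t^2)" by (rule order_trans)
  then show "((1 + \<bar>t\<bar>) / 2)\<^sup>2 \<le> 1 + t\<^sup>2" by (simp add: power_divide)
qed

lemma transl: fixes h :: "real \<Rightarrow> ennreal" assumes [measurable]: "h \<in> borel_measurable borel"
  shows "(\<integral>\<^sup>+x. h (x + A) \<partial>lborel) = (\<integral>\<^sup>+x. h x \<partial>lborel)"
  using nn_integral_real_affine[of h 1 A] by (simp add: add.commute)

lemma refl_int: fixes h :: "real \<Rightarrow> ennreal" assumes [measurable]: "h \<in> borel_measurable borel"
  shows "(\<integral>\<^sup>+y. h (x - y) \<partial>lborel) = (\<integral>\<^sup>+x. h x \<partial>lborel)"
  using nn_integral_real_affine[of h "-1" x] by simp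

definition w :: "real \<Rightarrow> real \<Rightarrow> ennreal" where
  "w s t = ennreal (jbr t powr (-s))"

lemma w_meas[measurable]: "w s \<in> borel_measurable borel"
  unfolding w_def jbr_def by measurable

definition Cw :: "real \<Rightarrow> ennreal" where
  "Cw p = (\<integral>\<^sup>+t. (w p t)^2 \<partial>lborel)"

lemma Cw_transl: "(\<integral>\<^sup>+t. (w p (t + A))^2 \<partial>lborel) = Cw p"
  unfolding Cw_def by (rule transl) measurable


lemma tail_fin:
  assumes s: "s > 1"
  shows "(\<integral>\<^sup>+t. ennreal ((1 + t) powr (-s)) * indicator {0..} t \<partial>lborel) < \<infinity>"
proof -
  have hi: "((\<lambda>x. x powr (-s)) has_integral -(1 powr (-s+1)) / (-s+1)) {1..}"
    by (rule has_integral_powr_to_inf) (use s in auto)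
  have "(\<integral>\<^sup>+x. ennreal (x powr (-s)) * indicator {1..} x \<partial>lborel) = ennreal (-(1 powr (-s+1)) / (-s+1))"
    by (rule nn_integral_has_integral_lebesgue'[OF _ hi]) simp
  also have "\<dots> < \<infinity>" by simp
  finally have f1: "(\<integral>\<^sup>+x. ennreal (x powr (-s)) * indicator {1..} x \<partial>lborel) < \<infinity>" .
  have "(\<integral>\<^sup>+x. ennreal (x powr (-s)) * indicator {1..} x \<partial>lborel)
      = (\<integral>\<^sup>+x. ennreal ((1 + x) powr (-s)) * indicator {1..} (1 + x) \<partial>lborel)"
    using nn_integral_real_affine[of "\<lambda>x. ennreal (x powr (-s)) * indicator {1..} x" 1 1] by simp
  also have "\<dots> = (\<integral>\<^sup>+t. ennreal ((1 + t) powr (-s)) * indicator {0..} t \<partial>lborel)"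
    by (intro nn_integral_cong) (auto simp: indicator_def)
  finally show ?thesis using f1 by simp
qed

lemma int_fin:
  assumes s: "s > 1"
  shows "(\<integral>\<^sup>+t. ennreal (jbr t powr (-s)) \<partial>lborel) < \<infinity>"
proof -
  define \<phi> where "\<phi> t = ennreal ((1 + t) powr (-s)) * indicator {0..} t" for t
  have [measurable]: "\<phi> \<in> borel_measurable borel" unfolding \<phi>_def by measurable
  have fin: "integral\<^sup>N lborel \<phi> < \<infinity>" unfolding \<phi>_def using tail_fin[OF s] by simp
  have refl: "(\<integral>\<^sup>+t. \<phi> (-t) \<partial>lborel) = integral\<^sup>N lborel \<phi>"
    using refl_int[of \<phi> 0] by simp
  have pt: "ennreal (jbr t powr (-s)) \<le> ennreal (2 powr s) * (\<phi> t + \<phi> (-t))" for t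
  proof -
    have "jbr t powr (-s) \<le> ((1 + \<bar>t\<bar>) / 2) powr (-s)"
      by (rule powr_mono2') (use s jbr_ge[of t] in auto)
    also have "\<dots> = 2 powr s * (1 + \<bar>t\<bar>) powr (-s)"
      by (simp add: powr_divide powr_minus divide_simps)
    finally have "ennreal (jbr t powr (-s)) \<le> ennreal (2 powr s * (1 + \<bar>t\<bar>) powr (-s))"
      by (rule ennreal_leI)
    also have "\<dots> = ennreal (2 powr s) * ennreal ((1 + \<bar>t\<bar>) powr (-s))"
      by (simp add: ennreal_mult)
    also have "ennreal ((1 + \<bar>t\<bar>) powr (-s)) \<le> \<phi> t + \<phi> (-t)"
      by (cases "t \<ge> 0") (auto simp: \<phi>_def indicator_def)
    finally show ?thesis by (simp add: mult_left_mono)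
  qed
  have "(\<integral>\<^sup>+t. ennreal (jbr t powr (-s)) \<partial>lborel) \<le> (\<integral>\<^sup>+t. ennreal (2 powr s) * (\<phi> t + \<phi> (-t)) \<partial>lborel)"
    by (rule nn_integral_mono) (rule pt)
  also have "\<dots> = ennreal (2 powr s) * (integral\<^sup>N lborel \<phi> + integral\<^sup>N lborel \<phi>)"
    by (simp add: nn_integral_cmult nn_integral_add refl)
  also have "\<dots> < \<infinity>" using fin by (simp add: ennreal_mult_less_top)
  finally show ?thesis .
qed

lemma Cw_fin: assumes "p > 1/2" shows "Cw p < \<infinity>"
proof -
  have "(w p t)^2 = ennreal (jbr t powr (-(2*p)))" for t
  proof -
    have "(w p t)^2 = ennreal (jbr t powr (-p) * jbr t powr (-p))"
      by (simp add: w_def power2_eq_square ennreal_mult)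
    also have "jbr t powr (-p) * jbr t powr (-p) = jbr t powr (-p + -p)"
      by (rule powr_add[symmetric])
    finally show ?thesis by simp
  qed
  then have "Cw p = (\<integral>\<^sup>+t. ennreal (jbr t powr (-(2*p))) \<partial>lborel)" by (simp add: Cw_def)
  then show ?thesis using int_fin[of "2*p"] assms by simp
qed

lemma CS_w:
  fixes P :: "real \<Rightarrow> ennreal"
  assumes [measurable]: "P \<in> borel_measurable borel"
  shows "(\<integral>\<^sup>+y. P y * w q (y + B) \<partial>lborel) \<le> Sq (\<integral>\<^sup>+y. P y ^ 2 \<partial>lborel) * Sq (Cw q)"
proof (rule le_Sq)
  show "(\<integral>\<^sup>+y. P y * w q (y + B) \<partial>lborel)^2 \<le> (\<integral>\<^sup>+y. P y ^ 2 \<partial>lborel) * Cw q"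
    using Cauchy_Schwarz_nn_integral[of P lborel "\<lambda>y. w q (y + B)"] Cw_transl[of q B] by simp
qed

lemma pairXY:
  fixes P Q :: "real \<Rightarrow> ennreal"
  assumes [measurable]: "P \<in> borel_measurable borel" "Q \<in> borel_measurable borel"
  shows "(\<integral>\<^sup>+x. (\<integral>\<^sup>+y. P y * Q (x - y) * (w q (y + B) * w p (x + A)) \<partial>lborel) \<partial>lborel)
     \<le> Sq (\<integral>\<^sup>+y. P y ^ 2 \<partial>lborel) * Sq (Cw q) * (Sq (\<integral>\<^sup>+z. Q z ^ 2 \<partial>lborel) * Sq (Cw p))"
proof -
  let ?K = "Sq (\<integral>\<^sup>+z. Q z ^ 2 \<partial>lborel) * Sq (Cw p)"
  have "(\<integral>\<^sup>+x. (\<integral>\<^sup>+y. P y * Q (x - y) * (w q (y + B) * w p (x + A)) \<partial>lborel) \<partial>lborel)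
     = (\<integral>\<^sup>+y. (\<integral>\<^sup>+x. P y * Q (x - y) * (w q (y + B) * w p (x + A)) \<partial>lborel) \<partial>lborel)"
    by (rule lborel_pair.Fubini'[symmetric]) measurable
  also have "\<dots> = (\<integral>\<^sup>+y. P y * w q (y + B) * (\<integral>\<^sup>+x. Q (x - y) * w p (x + A) \<partial>lborel) \<partial>lborel)"
    by (subst nn_integral_cmult[symmetric]) (auto simp: ac_simps intro!: nn_integral_cong)
  also have "\<dots> \<le> (\<integral>\<^sup>+y. P y * w q (y + B) * ?K \<partial>lborel)"
  proof (intro nn_integral_mono mult_left_mono le_Sq)
    fix y
    have "(\<integral>\<^sup>+x. Q (x - y) * w p (x + A) \<partial>lborel)^2
        \<le> (\<integral>\<^sup>+x. Q (x - y) ^ 2 \<partial>lborel) * (\<integral>\<^sup>+x. w p (x + A) ^ 2 \<partial>lborel)"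
      by (rule Cauchy_Schwarz_nn_integral) measurable
    also have "(\<integral>\<^sup>+x. Q (x - y) ^ 2 \<partial>lborel) = (\<integral>\<^sup>+z. Q z ^ 2 \<partial>lborel)"
      using transl[of "\<lambda>z. Q z ^ 2" "-y"] by simp
    finally show "(\<integral>\<^sup>+x. Q (x - y) * w p (x + A) \<partial>lborel)^2 \<le> (\<integral>\<^sup>+z. Q z ^ 2 \<partial>lborel) * Cw p"
      using Cw_transl[of p A] by simp
  qed simp
  also have "\<dots> = (\<integral>\<^sup>+y. P y * w q (y + B) \<partial>lborel) * ?K"
    by (rule nn_integral_multc) measurable
  also have "\<dots> \<le> Sq (\<integral>\<^sup>+y. P y ^ 2 \<partial>lborel) * Sq (Cw q) * ?K"
    by (intro mult_right_mono CS_w) auto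
  finally show ?thesis .
qed

lemma pairYZ:
  fixes P Q :: "real \<Rightarrow> ennreal"
  assumes [measurable]: "P \<in> borel_measurable borel" "Q \<in> borel_measurable borel"
  shows "(\<integral>\<^sup>+x. (\<integral>\<^sup>+y. P y * Q (x - y) * (w p (y + B) * w q (x - y + C)) \<partial>lborel) \<partial>lborel)
     \<le> Sq (\<integral>\<^sup>+y. P y ^ 2 \<partial>lborel) * Sq (Cw p) * (Sq (\<integral>\<^sup>+z. Q z ^ 2 \<partial>lborel) * Sq (Cw q))"
proof -
  have "(\<integral>\<^sup>+x. (\<integral>\<^sup>+y. P y * Q (x - y) * (w p (y + B) * w q (x - y + C)) \<partial>lborel) \<partial>lborel)
     = (\<integral>\<^sup>+y. (\<integral>\<^sup>+x. P y * Q (x - y) * (w p (y + B) * w q (x - y + C)) \<partial>lborel) \<partial>lborel)"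
    by (rule lborel_pair.Fubini'[symmetric]) measurable
  also have "\<dots> = (\<integral>\<^sup>+y. P y * w p (y + B) * (\<integral>\<^sup>+x. Q (x - y) * w q (x - y + C) \<partial>lborel) \<partial>lborel)"
    by (subst nn_integral_cmult[symmetric]) (auto simp: ac_simps intro!: nn_integral_cong)
  also have "\<dots> = (\<integral>\<^sup>+y. P y * w p (y + B) * (\<integral>\<^sup>+z. Q z * w q (z + C) \<partial>lborel) \<partial>lborel)"
  proof -
    have "(\<integral>\<^sup>+x. Q (x - y) * w q (x - y + C) \<partial>lborel) = (\<integral>\<^sup>+z. Q z * w q (z + C) \<partial>lborel)" for y
      using transl[of "\<lambda>z. Q z * w q (z + C)" "-y"] by simp
    then show ?thesis by simp
  qed
  also have "\<dots> = (\<integral>\<^sup>+y. P y * w p (y + B) \<partial>lborel) * (\<integral>\<^sup>+z. Q z * w q (z + C) \<partial>lborel)"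
    by (rule nn_integral_multc) measurable
  also have "\<dots> \<le> Sq (\<integral>\<^sup>+y. P y ^ 2 \<partial>lborel) * Sq (Cw p) * (Sq (\<integral>\<^sup>+z. Q z ^ 2 \<partial>lborel) * Sq (Cw q))"
    by (intro mult_mono CS_w) auto
  finally show ?thesis .
qed

lemma exists_s:
  fixes \<alpha> \<beta> \<gamma> :: real
  assumes "\<alpha> \<ge> 0" "\<alpha> + \<beta> > 1/2" "\<alpha> + \<gamma> > 1/2" "\<alpha> + \<beta> + \<gamma> > 1"
  shows "\<exists>s. 0 \<le> s \<and> s \<le> \<alpha> \<and> \<beta> + s > 1/2 \<and> \<gamma> + \<alpha> - s > 1/2"
proof -
  define m where "m = (\<alpha> + \<gamma> - \<beta>) / 2"
  show ?thesis
  proof (cases "m < 0")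
    case True then show ?thesis using assms by (intro exI[of _ 0]) (auto simp: m_def)
  next
    case False
    show ?thesis
    proof (cases "m > \<alpha>")
      case True then show ?thesis using assms by (intro exI[of _ \<alpha>]) (auto simp: m_def)
    next
      case False2: False
      have "0 \<le> m" "m \<le> \<alpha>" using False False2 by auto
      moreover have "\<beta> + m > 1/2" using assms unfolding m_def by (simp add: field_simps)
      moreover have "\<gamma> + \<alpha> - m > 1/2" using assms unfolding m_def by (simp add: field_simps)
      ultimately show ?thesis by blast
    qed
  qed
qed

lemma move_exp:
  fixes U V M \<alpha> \<beta> \<gamma> s :: real
  assumes "1 \<le> U" "1 \<le> V" "U \<le> M" "V \<le> M" "0 \<le> s" "s \<le> \<alpha>"
  shows "M powr (-\<alpha>) * U powr (-\<beta>) * V powr (-\<gamma>) \<le> U powr (-(\<beta> + s)) * V powr (-(\<gamma> + \<alpha> - s))"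
proof -
  have "M powr (-\<alpha>) = M powr (-s + -(\<alpha> - s))" by simp
  also have "\<dots> = M powr (-s) * M powr (-(\<alpha> - s))" by (rule powr_add)
  also have "\<dots> \<le> U powr (-s) * V powr (-(\<alpha> - s))"
    using assms by (intro mult_mono powr_mono2') auto
  finally have "M powr (-\<alpha>) * (U powr (-\<beta>) * V powr (-\<gamma>)) \<le> U powr (-s) * V powr (-(\<alpha> - s)) * (U powr (-\<beta>) * V powr (-\<gamma>))"
    by (rule mult_right_mono) simp
  also have "\<dots> = (U powr (-s) * U powr (-\<beta>)) * (V powr (-(\<alpha> - s)) * V powr (-\<gamma>))" by (simp add: ac_simps)
  also have "\<dots> = U powr (-s + -\<beta>) * V powr (-(\<alpha> - s) + -\<gamma>)"
    by (simp only: powr_add)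
  also have "\<dots> = U powr (-(\<beta> + s)) * V powr (-(\<gamma> + \<alpha> - s))"
    by (simp add: algebra_simps)
  finally show ?thesis by (simp add: ac_simps)
qed

lemma dom:
  fixes a b c :: real
  assumes "a \<ge> 0" "b \<ge> 0" "c \<ge> 0"
    and "min (a + b) (min (b + c) (c + a)) > 1/2"
    and "a + b + c > 1"
  shows "\<exists>p1 q1 p2 q2 p3 q3. p1 > 1/2 \<and> q1 > 1/2 \<and> p2 > 1/2 \<and> q2 > 1/2 \<and> p3 > 1/2 \<and> q3 > 1/2 \<and>
    (\<forall>X Y Z :: real. 1 \<le> X \<longrightarrow> 1 \<le> Y \<longrightarrow> 1 \<le> Z \<longrightarrow>
      Z powr (-a) * X powr (-b) * Y powr (-c) \<le>
      X powr (-p1) * Y powr (-q1) + Y powr (-p2) * Z powr (-q2) + X powr (-p3) * Z powr (-q3))"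
proof -
  obtain s1 where s1: "0 \<le> s1" "s1 \<le> a" "b + s1 > 1/2" "c + a - s1 > 1/2"
    using exists_s[of a b c] assms by auto
  obtain s2 where s2: "0 \<le> s2" "s2 \<le> b" "c + s2 > 1/2" "a + b - s2 > 1/2"
    using exists_s[of b c a] assms by auto
  obtain s3 where s3: "0 \<le> s3" "s3 \<le> c" "b + s3 > 1/2" "a + c - s3 > 1/2"
    using exists_s[of c b a] assms by auto
  show ?thesis
  proof (rule exI[of _ "b+s1"], rule exI[of _ "c+a-s1"], rule exI[of _ "c+s2"], rule exI[of _ "a+b-s2"],
      rule exI[of _ "b+s3"], rule exI[of _ "a+c-s3"], intro conjI allI impI)
    fix X Y Z :: real assume XYZ: "1 \<le> X" "1 \<le> Y" "1 \<le> Z"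
    let ?T1 = "X powr (-(b + s1)) * Y powr (-(c + a - s1))"
    let ?T2 = "Y powr (-(c + s2)) * Z powr (-(a + b - s2))"
    let ?T3 = "X powr (-(b + s3)) * Z powr (-(a + c - s3))"
    have nn: "0 \<le> ?T1" "0 \<le> ?T2" "0 \<le> ?T3" by auto
    consider "X \<le> Z \<and> Y \<le> Z" | "Z \<le> X \<and> Y \<le> X" | "X \<le> Y \<and> Z \<le> Y" by linarith
    then show "Z powr (-a) * X powr (-b) * Y powr (-c) \<le> ?T1 + ?T2 + ?T3"
    proof cases
      case 1
      have "Z powr (-a) * X powr (-b) * Y powr (-c) \<le> ?T1"
        by (rule move_exp) (use 1 XYZ s1 in auto)
      then show ?thesis using nn by linarith
    next
      case 2
      have "X powr (-b) * Y powr (-c) * Z powr (-a) \<le> ?T2"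
        by (rule move_exp) (use 2 XYZ s2 in auto)
      moreover have "Z powr (-a) * X powr (-b) * Y powr (-c) = X powr (-b) * Y powr (-c) * Z powr (-a)" by simp
      ultimately show ?thesis using nn by linarith
    next
      case 3
      have "Y powr (-c) * X powr (-b) * Z powr (-a) \<le> ?T3"
        by (rule move_exp) (use 3 XYZ s3 in auto)
      moreover have "Z powr (-a) * X powr (-b) * Y powr (-c) = Y powr (-c) * X powr (-b) * Z powr (-a)" by simp
      ultimately show ?thesis using nn by linarith
    qed
  qed (use s1 s2 s3 in simp_all)
qed

lemma w_inv: "w (-s) t * w s t = 1"
proof -
  have "w (-s) t * w s t = ennreal (jbr t powr s * jbr t powr (-s))"
    by (simp add: w_def ennreal_mult)
  also have "jbr t powr s * jbr t powr (-s) = jbr t powr (s + -s)" by (rule powr_add[symmetric])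
  finally show ?thesis using jbr_ge1[of t] by simp
qed

lemma w_dom:
  assumes dom: "\<forall>X Y Z :: real. 1 \<le> X \<longrightarrow> 1 \<le> Y \<longrightarrow> 1 \<le> Z \<longrightarrow>
      Z powr (-a) * X powr (-b) * Y powr (-c) \<le>
      X powr (-p1) * Y powr (-q1) + Y powr (-p2) * Z powr (-q2) + X powr (-p3) * Z powr (-q3)"
  shows "w a z * w b x * w c y \<le> w p1 x * w q1 y + w p2 y * w q2 z + w p3 x * w q3 z"
proof -
  let ?X = "jbr x" and ?Y = "jbr y" and ?Z = "jbr z"
  have "?Z powr (-a) * ?X powr (-b) * ?Y powr (-c) \<le>
      ?X powr (-p1) * ?Y powr (-q1) + ?Y powr (-p2) * ?Z powr (-q2) + ?X powr (-p3) * ?Z powr (-q3)"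
    using dom jbr_ge1 by blast
  then have "ennreal (?Z powr (-a) * ?X powr (-b) * ?Y powr (-c)) \<le>
      ennreal (?X powr (-p1) * ?Y powr (-q1) + ?Y powr (-p2) * ?Z powr (-q2) + ?X powr (-p3) * ?Z powr (-q3))"
    by (rule ennreal_leI)
  then show ?thesis
    by (simp add: w_def ennreal_mult ennreal_plus del: ennreal_plus[symmetric])
qed

lemma main_borel:
  fixes u v :: "real \<Rightarrow> ennreal"
  assumes [measurable]: "u \<in> borel_measurable borel" "v \<in> borel_measurable borel"
  assumes dom: "\<forall>X Y Z :: real. 1 \<le> X \<longrightarrow> 1 \<le> Y \<longrightarrow> 1 \<le> Z \<longrightarrow>
      Z powr (-a) * X powr (-b) * Y powr (-c) \<le>
      X powr (-p1) * Y powr (-q1) + Y powr (-p2) * Z powr (-q2) + X powr (-p3) * Z powr (-q3)"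
  shows "(\<integral>\<^sup>+x. w a (x + A) * (\<integral>\<^sup>+y. u y * v (x - y) \<partial>lborel) \<partial>lborel)
    \<le> (Sq (Cw p1) * Sq (Cw q1) + Sq (Cw p2) * Sq (Cw q2) + Sq (Cw p3) * Sq (Cw q3))
       * Sq (\<integral>\<^sup>+y. (w (-b) (y + B) * u y)^2 \<partial>lborel) * Sq (\<integral>\<^sup>+z. (w (-c) (z + C) * v z)^2 \<partial>lborel)"
proof -
  define F where "F y = w (-b) (y + B) * u y" for y
  define G where "G z = w (-c) (z + C) * v z" for z
  have [measurable]: "F \<in> borel_measurable borel" "G \<in> borel_measurable borel"
    unfolding F_def G_def by measurable
  let ?SF = "Sq (\<integral>\<^sup>+y. F y ^ 2 \<partial>lborel)" and ?SG = "Sq (\<integral>\<^sup>+z. G z ^ 2 \<partial>lborel)"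
  define W1 where "W1 x y = w p1 (y + B) * w q1 (x - y + C)" for x y
  define W2 where "W2 x y = w p2 (x - y + C) * w q2 (x + A)" for x y
  define W3 where "W3 x y = w p3 (y + B) * w q3 (x + A)" for x y
  have [measurable]: "case_prod W1 \<in> borel_measurable (lborel \<Otimes>\<^sub>M lborel)"
    "case_prod W2 \<in> borel_measurable (lborel \<Otimes>\<^sub>M lborel)"
    "case_prod W3 \<in> borel_measurable (lborel \<Otimes>\<^sub>M lborel)"
    unfolding W1_def W2_def W3_def by measurable
  have eq1: "w a (x + A) * (u y * v (x - y)) = F y * G (x - y) * (w a (x + A) * w b (y + B) * w c (x - y + C))" for x y
  proof -
    have "F y * G (x - y) * (w a (x + A) * w b (y + B) * w c (x - y + C))
        = (w (-b) (y + B) * w b (y + B)) * (w (-c) (x - y + C) * w c (x - y + C)) * (w a (x + A) * (u y * v (x - y)))"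
      by (simp add: F_def G_def ac_simps)
    then show ?thesis by (simp add: w_inv)
  qed
  have "(\<integral>\<^sup>+x. w a (x + A) * (\<integral>\<^sup>+y. u y * v (x - y) \<partial>lborel) \<partial>lborel)
      = (\<integral>\<^sup>+x. (\<integral>\<^sup>+y. F y * G (x - y) * (w a (x + A) * w b (y + B) * w c (x - y + C)) \<partial>lborel) \<partial>lborel)"
    by (subst nn_integral_cmult[symmetric]) (auto simp: eq1 intro!: nn_integral_cong)
  also have "\<dots> \<le> (\<integral>\<^sup>+x. (\<integral>\<^sup>+y. F y * G (x - y) * W1 x y + F y * G (x - y) * W2 x y + F y * G (x - y) * W3 x y \<partial>lborel) \<partial>lborel)"
  proof (intro nn_integral_mono)
    fix x y
    have "w a (x + A) * w b (y + B) * w c (x - y + C) \<le> W1 x y + W2 x y + W3 x y"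
      unfolding W1_def W2_def W3_def by (rule w_dom[OF dom])
    then have "F y * G (x - y) * (w a (x + A) * w b (y + B) * w c (x - y + C)) \<le> F y * G (x - y) * (W1 x y + W2 x y + W3 x y)"
      by (rule mult_left_mono) simp
    then show "F y * G (x - y) * (w a (x + A) * w b (y + B) * w c (x - y + C)) \<le> F y * G (x - y) * W1 x y + F y * G (x - y) * W2 x y + F y * G (x - y) * W3 x y"
      by (simp add: distrib_left)
  qed
  also have "\<dots> = (\<integral>\<^sup>+x. (\<integral>\<^sup>+y. F y * G (x - y) * W1 x y \<partial>lborel) \<partial>lborel)
      + (\<integral>\<^sup>+x. (\<integral>\<^sup>+y. F y * G (x - y) * W2 x y \<partial>lborel) \<partial>lborel)
      + (\<integral>\<^sup>+x. (\<integral>\<^sup>+y. F y * G (x - y) * W3 x y \<partial>lborel) \<partial>lborel)"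
    by (simp add: nn_integral_add)
  also have "\<dots> \<le> ?SF * Sq (Cw p1) * (?SG * Sq (Cw q1)) + ?SG * Sq (Cw p2) * (?SF * Sq (Cw q2)) + ?SF * Sq (Cw p3) * (?SG * Sq (Cw q3))"
  proof (intro add_mono)
    show "(\<integral>\<^sup>+x. (\<integral>\<^sup>+y. F y * G (x - y) * W1 x y \<partial>lborel) \<partial>lborel) \<le> ?SF * Sq (Cw p1) * (?SG * Sq (Cw q1))"
      unfolding W1_def by (rule pairYZ) measurable
    show "(\<integral>\<^sup>+x. (\<integral>\<^sup>+y. F y * G (x - y) * W3 x y \<partial>lborel) \<partial>lborel) \<le> ?SF * Sq (Cw p3) * (?SG * Sq (Cw q3))"
      unfolding W3_def by (rule pairXY) measurable
    have "(\<integral>\<^sup>+y. F y * G (x - y) * W2 x y \<partial>lborel) = (\<integral>\<^sup>+y. G y * F (x - y) * (w p2 (y + C) * w q2 (x + A)) \<partial>lborel)" for x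
      using refl_int[of "\<lambda>y. G y * F (x - y) * (w p2 (y + C) * w q2 (x + A))" x]
      by (simp add: W2_def ac_simps)
    then have "(\<integral>\<^sup>+x. (\<integral>\<^sup>+y. F y * G (x - y) * W2 x y \<partial>lborel) \<partial>lborel)
       = (\<integral>\<^sup>+x. (\<integral>\<^sup>+y. G y * F (x - y) * (w p2 (y + C) * w q2 (x + A)) \<partial>lborel) \<partial>lborel)" by simp
    also have "\<dots> \<le> ?SG * Sq (Cw p2) * (?SF * Sq (Cw q2))"
      by (rule pairXY) measurable
    finally show "(\<integral>\<^sup>+x. (\<integral>\<^sup>+y. F y * G (x - y) * W2 x y \<partial>lborel) \<partial>lborel) \<le> ?SG * Sq (Cw p2) * (?SF * Sq (Cw q2))" .
  qed
  also have "\<dots> = (Sq (Cw p1) * Sq (Cw q1) + Sq (Cw p2) * Sq (Cw q2) + Sq (Cw p3) * Sq (Cw q3)) * ?SF * ?SG"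
    by (simp add: algebra_simps)
  finally show ?thesis by (simp add: F_def G_def)
qed

lemma borel_version:
  fixes f :: "real \<Rightarrow> complex"
  assumes "f \<in> borel_measurable lebesgue"
  obtains u :: "real \<Rightarrow> ennreal" where "u \<in> borel_measurable borel" "AE x in lborel. ennreal (cmod (f x)) = u x"
proof -
  have "(\<lambda>x. ennreal (cmod (f x))) \<in> borel_measurable (completion lborel)" using assms by measurable
  from completion_ex_borel_measurable[OF this] obtain u where
    "u \<in> borel_measurable lborel" "AE x in lborel. ennreal (cmod (f x)) = u x" by blast
  then show ?thesis using that by simp
qed

lemma AE_refl:
  fixes v0 v :: "real \<Rightarrow> ennreal"
  assumes "AE z in lborel. v0 z = v z"
  shows "AE y in lborel. v0 (x - y) = v (x - y)"
proof -
  from assms obtain N where N: "{z \<in> space lborel. \<not> v0 z = v z} \<subseteq> N" "emeasure lborel N = 0" "N \<in> sets lborel"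
    by (rule AE_E)
  have "AE z in lborel. z \<notin> N" using N by (intro AE_not_in) (simp add: null_sets_def)
  moreover have [measurable]: "N \<in> sets borel" using N by simp
  ultimately have "AE y in lborel. x + (-1) * y \<notin> N"
    by (intro AE_borel_affine) auto
  then show ?thesis
  proof eventually_elim
    case (elim y) then show ?case using N by auto
  qed
qed

lemma L2_conv:
  fixes f :: "real \<Rightarrow> complex" and u :: "real \<Rightarrow> ennreal"
  assumes "AE x in lborel. ennreal (cmod (f x)) = u x"
  shows "L2norm (\<lambda>x. complex_of_real (jbr (x + B) powr b) * f x) = Sq (\<integral>\<^sup>+y. (w (-b) (y + B) * u y)^2 \<partial>lborel)"
proof -
  have "(\<integral>\<^sup>+x. ennreal ((cmod (complex_of_real (jbr (x + B) powr b) * f x))\<^sup>2) \<partial>lebesgue)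
      = (\<integral>\<^sup>+x. ennreal ((cmod (complex_of_real (jbr (x + B) powr b) * f x))\<^sup>2) \<partial>lborel)"
    by (rule nn_integral_completion)
  also have "\<dots> = (\<integral>\<^sup>+y. (w (-b) (y + B) * u y)^2 \<partial>lborel)"
  proof (rule nn_integral_cong_AE)
    show "AE x in lborel. ennreal ((cmod (complex_of_real (jbr (x + B) powr b) * f x))\<^sup>2) = (w (-b) (x + B) * u x)\<^sup>2"
      using assms
    proof (rule AE_mp, intro AE_I2 impI)
      fix x assume h: "ennreal (cmod (f x)) = u x"
      have "ennreal ((cmod (complex_of_real (jbr (x + B) powr b) * f x))\<^sup>2) = (ennreal (jbr (x + B) powr b) * ennreal (cmod (f x)))^2"
        by (simp add: norm_mult ennreal_mult ennreal_power[symmetric])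
      then show "ennreal ((cmod (complex_of_real (jbr (x + B) powr b) * f x))\<^sup>2) = (w (-b) (x + B) * u x)\<^sup>2"
        using h by (simp add: w_def)
    qed
  qed
  finally show ?thesis by (simp add: L2norm_Sq)
qed

lemma L1_bound:
  fixes f g :: "real \<Rightarrow> complex" and u v :: "real \<Rightarrow> ennreal"
  assumes hu: "AE x in lborel. ennreal (cmod (f x)) = u x"
    and hv: "AE x in lborel. ennreal (cmod (g x)) = v x"
  shows "L1norm (\<lambda>x. complex_of_real (jbr (x + A) powr (-a)) * conv f g x)
     \<le> (\<integral>\<^sup>+x. w a (x + A) * (\<integral>\<^sup>+y. u y * v (x - y) \<partial>lborel) \<partial>lborel)"
proof -
  have "L1norm (\<lambda>x. complex_of_real (jbr (x + A) powr (-a)) * conv f g x)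
      = (\<integral>\<^sup>+x. ennreal (cmod (complex_of_real (jbr (x + A) powr (-a)) * conv f g x)) \<partial>lborel)"
    unfolding L1norm_def by (rule nn_integral_completion)
  also have "\<dots> \<le> (\<integral>\<^sup>+x. w a (x + A) * (\<integral>\<^sup>+y. u y * v (x - y) \<partial>lborel) \<partial>lborel)"
  proof (rule nn_integral_mono)
    fix x
    have c1: "ennreal (cmod (conv f g x)) \<le> (\<integral>\<^sup>+y. ennreal (cmod (f y * g (x - y))) \<partial>lebesgue)"
    proof (cases "integrable lebesgue (\<lambda>y. f y * g (x - y))")
      case True
      then show ?thesis unfolding conv_def by (rule integral_norm_bound_ennreal)
    next
      case False
      then show ?thesis unfolding conv_def by (simp add: not_integrable_integral_eq)
    qed
    also have "\<dots> = (\<integral>\<^sup>+y. ennreal (cmod (f y * g (x - y))) \<partial>lborel)"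
      by (rule nn_integral_completion)
    also have "\<dots> = (\<integral>\<^sup>+y. u y * v (x - y) \<partial>lborel)"
    proof (rule nn_integral_cong_AE)
      show "AE y in lborel. ennreal (cmod (f y * g (x - y))) = u y * v (x - y)"
        using hu AE_refl[OF hv, of x]
        by eventually_elim (simp add: norm_mult ennreal_mult)
    qed
    finally have c2: "ennreal (cmod (conv f g x)) \<le> (\<integral>\<^sup>+y. u y * v (x - y) \<partial>lborel)" .
    have "ennreal (cmod (complex_of_real (jbr (x + A) powr (-a)) * conv f g x))
        = w a (x + A) * ennreal (cmod (conv f g x))"
      by (simp add: norm_mult ennreal_mult w_def)
    also have "\<dots> \<le> w a (x + A) * (\<integral>\<^sup>+y. u y * v (x - y) \<partial>lborel)"
      by (rule mult_left_mono[OF c2]) simp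
    finally show "ennreal (cmod (complex_of_real (jbr (x + A) powr (-a)) * conv f g x))
        \<le> w a (x + A) * (\<integral>\<^sup>+y. u y * v (x - y) \<partial>lborel)" .
  qed
  finally show ?thesis .
qed

theorem lemma2p3:
  fixes a b c :: real
  assumes "a \<ge> 0" "b \<ge> 0" "c \<ge> 0"
    and "min (a + b) (min (b + c) (c + a)) > 1/2"
    and "a + b + c > 1"
  shows "\<exists>K::real. \<forall>A B C :: real. \<forall>f g :: real \<Rightarrow> complex.
           f \<in> borel_measurable lebesgue \<longrightarrow> g \<in> borel_measurable lebesgue \<longrightarrow>
           L1norm (\<lambda>x. complex_of_real (jbr (x + A) powr (-a)) * conv f g x)
             \<le> ennreal K * L2norm (\<lambda>x. complex_of_real (jbr (x + B) powr b) * f x)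
                        * L2norm (\<lambda>x. complex_of_real (jbr (x + C) powr c) * g x)"
proof -
  obtain p1 q1 p2 q2 p3 q3 where ps: "p1 > 1/2" "q1 > 1/2" "p2 > 1/2" "q2 > 1/2" "p3 > 1/2" "q3 > 1/2"
    and dom: "\<forall>X Y Z :: real. 1 \<le> X \<longrightarrow> 1 \<le> Y \<longrightarrow> 1 \<le> Z \<longrightarrow>
      Z powr (-a) * X powr (-b) * Y powr (-c) \<le>
      X powr (-p1) * Y powr (-q1) + Y powr (-p2) * Z powr (-q2) + X powr (-p3) * Z powr (-q3)"
    using dom[OF assms] by blast
  define K0 where "K0 = Sq (Cw p1) * Sq (Cw q1) + Sq (Cw p2) * Sq (Cw q2) + Sq (Cw p3) * Sq (Cw q3)"
  have fin: "K0 < \<infinity>"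
    unfolding K0_def using Sq_fin[OF Cw_fin[OF ps(1)]] Sq_fin[OF Cw_fin[OF ps(2)]] Sq_fin[OF Cw_fin[OF ps(3)]]
      Sq_fin[OF Cw_fin[OF ps(4)]] Sq_fin[OF Cw_fin[OF ps(5)]] Sq_fin[OF Cw_fin[OF ps(6)]]
    by (simp add: ennreal_mult_less_top)
  show ?thesis
  proof (intro exI[of _ "enn2real K0"] allI impI)
    fix A B C :: real and f g :: "real \<Rightarrow> complex"
    assume f: "f \<in> borel_measurable lebesgue" and g: "g \<in> borel_measurable lebesgue"
    obtain u where [measurable]: "u \<in> borel_measurable borel" and hu: "AE x in lborel. ennreal (cmod (f x)) = u x"
      using borel_version[OF f] by blast
    obtain v where [measurable]: "v \<in> borel_measurable borel" and hv: "AE x in lborel. ennreal (cmod (g x)) = v x"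
      using borel_version[OF g] by blast
    have "L1norm (\<lambda>x. complex_of_real (jbr (x + A) powr (-a)) * conv f g x)
       \<le> (\<integral>\<^sup>+x. w a (x + A) * (\<integral>\<^sup>+y. u y * v (x - y) \<partial>lborel) \<partial>lborel)"
      by (rule L1_bound[OF hu hv])
    also have "\<dots> \<le> K0 * Sq (\<integral>\<^sup>+y. (w (-b) (y + B) * u y)^2 \<partial>lborel) * Sq (\<integral>\<^sup>+z. (w (-c) (z + C) * v z)^2 \<partial>lborel)"
      unfolding K0_def by (rule main_borel) (use dom in auto)
    also have "\<dots> = ennreal (enn2real K0) * L2norm (\<lambda>x. complex_of_real (jbr (x + B) powr b) * f x)
                        * L2norm (\<lambda>x. complex_of_real (jbr (x + C) powr c) * g x)"
      using fin by (simp add: L2_conv[OF hu] L2_conv[OF hv])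
    finally show "L1norm (\<lambda>x. complex_of_real (jbr (x + A) powr (-a)) * conv f g x)
             \<le> ennreal (enn2real K0) * L2norm (\<lambda>x. complex_of_real (jbr (x + B) powr b) * f x)
                        * L2norm (\<lambda>x. complex_of_real (jbr (x + C) powr c) * g x)" .
  qed
qed

end
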